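(* For every $q\ge2$, $\mathfrak{Z}^+(K_{2,q})$ is unique: if $G$ is a graph with no isolated vertices and $\mathfrak{Z}^+(G)\cong\mathfrak{Z}^+(K_{2,q})$, then $G\cong K_{2,q}$.
   Context: All graphs are finite, simple, undirected. PSD color change rule: with $B$ the set of blue vertices and $W=V(G)\setminus B$ the white vertices, let $W_1,\dots,W_k$ be the vertex sets of the connected components of $G[W]$; if $u\in B$, $w\in W_i$, and $w$ is the only white neighbor of $u$ in $G[W_i\cup B]$, then $u$ may color $w$ blue. $S$ is a PSD forcing set if starting with exactly $S$ blue and applying the rule repeatedly, all vertices become blue. The PSD TAR graph $\mathfrak{Z}^+(G)$ has as vertices the PSD forcing sets of $G$, with $S_1S_2$ an edge iff $|S_1\ominus S_2|=1$ (symmetric difference). $K_{2,q}$ is the complete bipartite graph with parts of sizes $2$ and $q$. *)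

theory Defs
  imports Main
begin

definition simple_graph :: "'a set \<Rightarrow> ('a \<Rightarrow> 'a \<Rightarrow> bool) \<Rightarrow> bool" where
  "simple_graph V E \<longleftrightarrow> finite V \<and> (\<forall>x y. E x y \<longrightarrow> x \<in> V \<and> y \<in> V)
     \<and> (\<forall>x y. E x y \<longrightarrow> E y x) \<and> (\<forall>x. \<not> E x x)"

definition no_isolated :: "'a set \<Rightarrow> ('a \<Rightarrow> 'a \<Rightarrow> bool) \<Rightarrow> bool" where
  "no_isolated V E \<longleftrightarrow> (\<forall>v\<in>V. \<exists>u\<in>V. E v u)"

definition graph_iso :: "'a set \<Rightarrow> ('a \<Rightarrow> 'a \<Rightarrow> bool) \<Rightarrow> 'b set \<Rightarrow> ('b \<Rightarrow> 'b \<Rightarrow> bool) \<Rightarrow> bool" where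
  "graph_iso V1 E1 V2 E2 \<longleftrightarrow>
     (\<exists>f. bij_betw f V1 V2 \<and> (\<forall>x\<in>V1. \<forall>y\<in>V1. E1 x y \<longleftrightarrow> E2 (f x) (f y)))"

definition white_comp :: "'a set \<Rightarrow> ('a \<Rightarrow> 'a \<Rightarrow> bool) \<Rightarrow> 'a set \<Rightarrow> 'a \<Rightarrow> 'a set" where
  "white_comp V E B w =
     {x. (\<lambda>a b. a \<in> V - B \<and> b \<in> V - B \<and> E a b)\<^sup>*\<^sup>* w x}"

definition psd_force :: "'a set \<Rightarrow> ('a \<Rightarrow> 'a \<Rightarrow> bool) \<Rightarrow> 'a set \<Rightarrow> 'a \<Rightarrow> 'a \<Rightarrow> bool" where
  "psd_force V E B u w \<longleftrightarrow> u \<in> B \<and> w \<in> V - B \<and> E u w \<and>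
     (\<forall>x\<in>white_comp V E B w. E u x \<longrightarrow> x = w)"

definition psd_step :: "'a set \<Rightarrow> ('a \<Rightarrow> 'a \<Rightarrow> bool) \<Rightarrow> 'a set \<Rightarrow> 'a set \<Rightarrow> bool" where
  "psd_step V E B B' \<longleftrightarrow> (\<exists>u w. psd_force V E B u w \<and> B' = insert w B)"

definition psd_forcing_set :: "'a set \<Rightarrow> ('a \<Rightarrow> 'a \<Rightarrow> bool) \<Rightarrow> 'a set \<Rightarrow> bool" where
  "psd_forcing_set V E S \<longleftrightarrow> S \<subseteq> V \<and> (psd_step V E)\<^sup>*\<^sup>* S V"

definition psd_tar_V :: "'a set \<Rightarrow> ('a \<Rightarrow> 'a \<Rightarrow> bool) \<Rightarrow> 'a set set" where
  "psd_tar_V V E = {S. psd_forcing_set V E S}"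

definition psd_tar_E :: "'a set \<Rightarrow> ('a \<Rightarrow> 'a \<Rightarrow> bool) \<Rightarrow> 'a set \<Rightarrow> 'a set \<Rightarrow> bool" where
  "psd_tar_E V E S1 S2 \<longleftrightarrow> S1 \<in> psd_tar_V V E \<and> S2 \<in> psd_tar_V V E \<and>
     card ((S1 - S2) \<union> (S2 - S1)) = 1"

text \<open>K_{2,q} on vertices {0,...,q+1}: parts {0,1} and {2,...,q+1}.\<close>
definition K2q_V :: "nat \<Rightarrow> nat set" where
  "K2q_V q = {..<q+2}"

definition K2q_E :: "nat \<Rightarrow> nat \<Rightarrow> nat \<Rightarrow> bool" where
  "K2q_E q x y \<longleftrightarrow> x \<in> K2q_V q \<and> y \<in> K2q_V q \<and> ((x < 2 \<and> 2 \<le> y) \<or> (2 \<le> x \<and> y < 2))"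

end

theory Submission
  imports Defs
begin


lemma wc_mono: "B \<subseteq> B' \<Longrightarrow> white_comp V E B' w \<subseteq> white_comp V E B w"
  unfolding white_comp_def
proof
  fix x assume "B \<subseteq> B'" "x \<in> {x. (\<lambda>a b. a \<in> V - B' \<and> b \<in> V - B' \<and> E a b)\<^sup>*\<^sup>* w x}"
  then have "(\<lambda>a b. a \<in> V - B' \<and> b \<in> V - B' \<and> E a b)\<^sup>*\<^sup>* w x" by simp
  then have "(\<lambda>a b. a \<in> V - B \<and> b \<in> V - B \<and> E a b)\<^sup>*\<^sup>* w x"
    by (rule rtranclp_mono[THEN predicate2D, rotated]) (use \<open>B \<subseteq> B'\<close> in auto)
  then show "x \<in> {x. (\<lambda>a b. a \<in> V - B \<and> b \<in> V - B \<and> E a b)\<^sup>*\<^sup>* w x}" by simp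
qed

lemma force_mono: "psd_force V E B u w \<Longrightarrow> B \<subseteq> B' \<Longrightarrow> w \<notin> B' \<Longrightarrow> psd_force V E B' u w"
  unfolding psd_force_def using wc_mono[of B B' V E w] by blast

lemma fs_up_aux:
  assumes "(psd_step V E)\<^sup>*\<^sup>* S V"
  shows "\<forall>T. S \<subseteq> T \<longrightarrow> T \<subseteq> V \<longrightarrow> (psd_step V E)\<^sup>*\<^sup>* T V"
  using assms
proof (induction rule: converse_rtranclp_induct)
  case base
  then show ?case by auto
next
  case (step y z)
  show ?case
  proof (intro allI impI)
    fix T assume T: "y \<subseteq> T" "T \<subseteq> V"
    from step.hyps(1) obtain u w where f: "psd_force V E y u w" and z: "z = insert w y"
      unfolding psd_step_def by blast
    show "(psd_step V E)\<^sup>*\<^sup>* T V"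
    proof (cases "w \<in> T")
      case True
      then show ?thesis using step.IH z T by auto
    next
      case False
      have f2: "psd_force V E T u w" using force_mono[OF f T(1) False] .
      have wV: "w \<in> V" using f unfolding psd_force_def by auto
      have "psd_step V E T (insert w T)" unfolding psd_step_def using f2 by blast
      moreover have "(psd_step V E)\<^sup>*\<^sup>* (insert w T) V" using step.IH z T wV by auto
      ultimately show ?thesis by (rule converse_rtranclp_into_rtranclp)
    qed
  qed
qed

lemma fs_up: "psd_forcing_set V E S \<Longrightarrow> S \<subseteq> T \<Longrightarrow> T \<subseteq> V \<Longrightarrow> psd_forcing_set V E T"
  unfolding psd_forcing_set_def using fs_up_aux by blast

lemma force_exists:
  assumes "psd_forcing_set V E S" "S \<noteq> V"
  shows "\<exists>u w. psd_force V E S u w"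
proof -
  have "(psd_step V E)\<^sup>*\<^sup>* S V" using assms unfolding psd_forcing_set_def by auto
  then show ?thesis
    by (rule converse_rtranclpE) (use assms(2) in \<open>auto simp: psd_step_def\<close>)
qed

lemma force_step_fs:
  assumes "psd_force V E S u w" "psd_forcing_set V E (insert w S)" "S \<subseteq> V"
  shows "psd_forcing_set V E S"
proof -
  have "psd_step V E S (insert w S)" unfolding psd_step_def using assms(1) by blast
  then show ?thesis using assms(2,3) unfolding psd_forcing_set_def
    by (meson converse_rtranclp_into_rtranclp)
qed

lemma wc_refl: "w \<in> V - B \<Longrightarrow> w \<in> white_comp V E B w"
  unfolding white_comp_def by simp

lemma wc_edge: "x \<in> white_comp V E B w \<Longrightarrow> y \<in> V - B \<Longrightarrow> x \<in> V - B \<Longrightarrow> E x y \<Longrightarrow> y \<in> white_comp V E B w"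
  unfolding white_comp_def by (auto intro: rtranclp.rtrancl_into_rtrancl)

lemma wc_white: assumes "x \<in> white_comp V E B w" "w \<in> V - B" shows "x \<in> V - B"
proof -
  have "(\<lambda>a b. a \<in> V - B \<and> b \<in> V - B \<and> E a b)\<^sup>*\<^sup>* w x" using assms(1) unfolding white_comp_def by simp
  then show ?thesis by (induction rule: rtranclp_induct) (use assms(2) in auto)
qed

lemma wc_single:
  assumes "w \<in> V - B" "\<forall>y\<in>V - B. \<not> E w y"
  shows "white_comp V E B w = {w}"
proof -
  have "x = w" if "(\<lambda>a b. a \<in> V - B \<and> b \<in> V - B \<and> E a b)\<^sup>*\<^sup>* w x" for x
    using that by (induction rule: rtranclp_induct) (use assms in auto)
  then show ?thesis unfolding white_comp_def by auto
qed

lemma no_force_by: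
  assumes "x \<in> white_comp V E B w" "E u x" "x \<noteq> w"
  shows "\<not> psd_force V E B u w"
  using assms unfolding psd_force_def by auto


lemma tarV_sub: "S \<in> psd_tar_V V E \<Longrightarrow> S \<subseteq> V"
  unfolding psd_tar_V_def psd_forcing_set_def by auto

lemma tarE_sym: "psd_tar_E V E S T \<Longrightarrow> psd_tar_E V E T S"
  unfolding psd_tar_E_def by (auto simp: Un_commute)

lemma walk_bound:
  assumes "finite V" "S \<in> psd_tar_V V E" "(psd_tar_E V E ^^ k) S T"
  shows "card ((S - T) \<union> (T - S)) \<le> k"
  using assms(3)
proof (induction k arbitrary: T)
  case 0
  then show ?case by simp
next
  case (Suc k)
  from Suc.prems obtain U where U: "(psd_tar_E V E ^^ k) S U" "psd_tar_E V E U T"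
    by (rule relpowp_Suc_E)
  have IH: "card ((S - U) \<union> (U - S)) \<le> k" using Suc.IH[OF U(1)] .
  have UT: "card ((U - T) \<union> (T - U)) = 1" "U \<subseteq> V" "T \<subseteq> V"
    using U(2) tarV_sub unfolding psd_tar_E_def by auto
  have SV: "S \<subseteq> V" using assms(2) tarV_sub by auto
  have fS: "finite S" "finite U" "finite T" using SV UT(2,3) assms(1) finite_subset by blast+
  have fin: "finite ((S - U) \<union> (U - S))" "finite ((U - T) \<union> (T - U))"
    using fS by auto
  have "(S - T) \<union> (T - S) \<subseteq> ((S - U) \<union> (U - S)) \<union> ((U - T) \<union> (T - U))" by auto
  then have "card ((S - T) \<union> (T - S)) \<le> card (((S - U) \<union> (U - S)) \<union> ((U - T) \<union> (T - U)))"
    using fin by (intro card_mono) (simp_all)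
  also have "\<dots> \<le> card ((S - U) \<union> (U - S)) + card ((U - T) \<union> (T - U))" by (rule card_Un_le)
  finally show ?case using IH UT(1) by simp
qed

lemma up_walk:
  assumes "finite V" "S \<in> psd_tar_V V E"
  shows "S \<subseteq> T \<Longrightarrow> T \<subseteq> V \<Longrightarrow> (psd_tar_E V E ^^ card (T - S)) T S"
proof (induction "card (T - S)" arbitrary: T)
  case 0
  have "finite (T - S)" using assms(1) 0 finite_subset[of "T - S" V] by auto
  then have "T - S = {}" using 0 by simp
  then show ?case using 0 by auto
next
  case (Suc n)
  then obtain x where x: "x \<in> T - S" by (metis card.empty empty_iff nat.distinct(1) subsetI subset_antisym)
  let ?T = "T - {x}"
  have fT: "finite (T - S)" using Suc.prems(2) assms(1) finite_subset by blast
  have "?T - S = (T - S) - {x}" by auto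
  then have c: "card (?T - S) = n" using Suc.hyps(2) x fT by (simp add: card_Diff_singleton)
  have IH: "(psd_tar_E V E ^^ n) ?T S" using Suc.hyps(1)[OF c[symmetric]] Suc.prems x c by auto
  have SF: "psd_forcing_set V E S" using assms(2) unfolding psd_tar_V_def by auto
  have F1: "T \<in> psd_tar_V V E" using fs_up[OF SF Suc.prems] unfolding psd_tar_V_def by auto
  have F2: "?T \<in> psd_tar_V V E" using fs_up[OF SF, of ?T] Suc.prems x unfolding psd_tar_V_def by auto
  have "(T - ?T) \<union> (?T - T) = {x}" using x by auto
  then have "psd_tar_E V E T ?T" unfolding psd_tar_E_def using F1 F2 by auto
  then show ?case using IH Suc.hyps(2) by (metis relpowp_Suc_I2)
qed


lemma relpow_transfer:
  assumes "\<forall>x y. E1 x y \<longrightarrow> x \<in> V1 \<and> y \<in> V1"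
    and "\<forall>x\<in>V1. \<forall>y\<in>V1. E1 x y \<longleftrightarrow> E2 (f x) (f y)"
  shows "(E1 ^^ k) x y \<Longrightarrow> (E2 ^^ k) (f x) (f y)"
proof (induction k arbitrary: y)
  case 0
  then show ?case by simp
next
  case (Suc k)
  from Suc.prems obtain z where z: "(E1 ^^ k) x z" "E1 z y" by (rule relpowp_Suc_E)
  have zy: "z \<in> V1" "y \<in> V1" using assms(1) z(2) by blast+
  have "E2 (f z) (f y)" using assms(2) zy z(2) by blast
  with Suc.IH[OF z(1)] show ?case by (rule relpowp_Suc_I)
qed

lemma iso_sym:
  assumes "graph_iso V1 E1 V2 E2"
  shows "graph_iso V2 E2 V1 E1"
proof -
  obtain f where f: "bij_betw f V1 V2" "\<forall>x\<in>V1. \<forall>y\<in>V1. E1 x y \<longleftrightarrow> E2 (f x) (f y)"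
    using assms unfolding graph_iso_def by auto
  let ?g = "inv_into V1 f"
  have g: "bij_betw ?g V2 V1" using f(1) by (rule bij_betw_inv_into)
  have "\<forall>x\<in>V2. \<forall>y\<in>V2. E2 x y \<longleftrightarrow> E1 (?g x) (?g y)"
  proof (intro ballI)
    fix x y assume xy: "x \<in> V2" "y \<in> V2"
    have gx: "?g x \<in> V1" "?g y \<in> V1" using g xy by (simp_all add: bij_betwE)
    have fx: "f (?g x) = x" "f (?g y) = y" using xy f(1)
      by (simp_all add: bij_betw_inv_into_right)
    have "E1 (?g x) (?g y) \<longleftrightarrow> E2 (f (?g x)) (f (?g y))" using f(2) gx by blast
    then show "E2 x y \<longleftrightarrow> E1 (?g x) (?g y)" using fx by simp
  qed
  then show ?thesis unfolding graph_iso_def using g by blast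
qed

lemma symd_single:
  assumes "(S - T) \<union> (T - S) = {x}"
  shows "T = (S - {x}) \<union> ({x} - S)"
proof
  show "T \<subseteq> (S - {x}) \<union> ({x} - S)"
  proof
    fix y assume y: "y \<in> T"
    show "y \<in> (S - {x}) \<union> ({x} - S)"
    proof (cases "y \<in> S")
      case True
      then have "y \<notin> (S - T) \<union> (T - S)" using y by blast
      then have "y \<noteq> x" using assms by blast
      then show ?thesis using True by blast
    next
      case False
      then have "y \<in> (S - T) \<union> (T - S)" using y by blast
      then show ?thesis using assms False by blast
    qed
  qed
  show "(S - {x}) \<union> ({x} - S) \<subseteq> T"
  proof
    fix y assume y: "y \<in> (S - {x}) \<union> ({x} - S)"
    show "y \<in> T"
    proof (cases "y = x")
      case True
      then have "y \<notin> S" using y by blast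
      moreover have "y \<in> (S - T) \<union> (T - S)" using assms True by blast
      ultimately show ?thesis by blast
    next
      case False
      then have "y \<in> S" "y \<notin> (S - T) \<union> (T - S)" using y assms by blast+
      then show ?thesis by blast
    qed
  qed
qed


lemma deg_le:
  assumes "finite V"
  shows "card {T. psd_tar_E V E S T} \<le> card V"
proof -
  have "{T. psd_tar_E V E S T} \<subseteq> (\<lambda>x. (S - {x}) \<union> ({x} - S)) ` V"
  proof
    fix T assume "T \<in> {T. psd_tar_E V E S T}"
    then have h: "card ((S - T) \<union> (T - S)) = 1" "S \<subseteq> V" "T \<subseteq> V"
      unfolding psd_tar_E_def using tarV_sub by blast+
    then obtain x where x: "(S - T) \<union> (T - S) = {x}" by (meson card_1_singletonE)
    have "x \<in> (S - T) \<union> (T - S)" using x by simp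
    then have "x \<in> V" using h(2,3) by blast
    then show "T \<in> (\<lambda>x. (S - {x}) \<union> ({x} - S)) ` V" using symd_single[OF x] by blast
  qed
  then have "card {T. psd_tar_E V E S T} \<le> card ((\<lambda>x. (S - {x}) \<union> ({x} - S)) ` V)"
    using assms by (intro card_mono) simp_all
  also have "\<dots> \<le> card V" using assms by (rule card_image_le)
  finally show ?thesis .
qed

lemma full_minus_one:
  assumes "simple_graph V E" "no_isolated V E" "v \<in> V"
  shows "psd_forcing_set V E (V - {v})"
proof -
  obtain u where u: "u \<in> V" "E v u" using assms(2,3) unfolding no_isolated_def by auto
  have uv: "u \<noteq> v" "E u v" using u assms(1) unfolding simple_graph_def by blast+
  have wc: "white_comp V E (V - {v}) v = {v}"
  proof (rule wc_single)
    show "v \<in> V - (V - {v})" using assms(3) by simp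
    have "\<not> E v v" using assms(1) unfolding simple_graph_def by blast
    then show "\<forall>y\<in>V - (V - {v}). \<not> E v y" by blast
  qed
  have "psd_force V E (V - {v}) u v" unfolding psd_force_def wc using uv u assms(3) by blast
  moreover have "psd_forcing_set V E (insert v (V - {v}))"
    unfolding psd_forcing_set_def using assms(3) by (simp add: insert_absorb)
  ultimately show ?thesis using force_step_fs[of V E "V - {v}" u v] by blast
qed

lemma deg_full:
  assumes "simple_graph V E" "no_isolated V E"
  shows "card {T. psd_tar_E V E V T} = card V"
proof -
  have fin: "finite V" using assms(1) unfolding simple_graph_def by auto
  have VF: "V \<in> psd_tar_V V E" unfolding psd_tar_V_def psd_forcing_set_def by auto
  have "(\<lambda>v. V - {v}) ` V \<subseteq> {T. psd_tar_E V E V T}"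
  proof
    fix T assume "T \<in> (\<lambda>v. V - {v}) ` V"
    then obtain v where v: "v \<in> V" "T = V - {v}" by auto
    have "(V - T) \<union> (T - V) = {v}" using v by auto
    moreover have "T \<in> psd_tar_V V E" using full_minus_one[OF assms v(1)] v(2) unfolding psd_tar_V_def by simp
    ultimately have "psd_tar_E V E V T" unfolding psd_tar_E_def using VF by simp
    then show "T \<in> {T. psd_tar_E V E V T}" by simp
  qed
  moreover have "inj_on (\<lambda>v. V - {v}) V"
  proof (rule inj_onI)
    fix x y assume xy: "x \<in> V" "y \<in> V" "V - {x} = V - {y}"
    show "x = y"
    proof (rule ccontr)
      assume "x \<noteq> y"
      then have "x \<in> V - {y}" using xy(1) by blast
      then show False using xy(3) by blast
    qed
  qed
  moreover have "finite {T. psd_tar_E V E V T}"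
  proof (rule finite_subset[of _ "Pow V"])
    show "{T. psd_tar_E V E V T} \<subseteq> Pow V" using tarV_sub unfolding psd_tar_E_def by auto
  qed (use fin in auto)
  ultimately have c1: "card ((\<lambda>v. V - {v}) ` V) \<le> card {T. psd_tar_E V E V T}"
    and c2: "card ((\<lambda>v. V - {v}) ` V) = card V"
    by (metis card_mono, metis card_image)
  then have "card V \<le> card {T. psd_tar_E V E V T}" by linarith
  then show ?thesis using deg_le[OF fin, of E V] by simp
qed

lemma iso_deg:
  assumes "bij_betw f V1 V2" "\<forall>x\<in>V1. \<forall>y\<in>V1. E1 x y \<longleftrightarrow> E2 (f x) (f y)"
    "\<forall>x y. E1 x y \<longrightarrow> x \<in> V1 \<and> y \<in> V1" "\<forall>x y. E2 x y \<longrightarrow> x \<in> V2 \<and> y \<in> V2" "S \<in> V1"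
  shows "card {T. E2 (f S) T} = card {T. E1 S T}"
proof -
  have "{T. E2 (f S) T} = f ` {T. E1 S T}"
  proof
    show "f ` {T. E1 S T} \<subseteq> {T. E2 (f S) T}"
    proof
      fix T assume "T \<in> f ` {T. E1 S T}"
      then obtain T' where T': "E1 S T'" "T = f T'" by blast
      then have "T' \<in> V1" using assms(3) by blast
      then have "E2 (f S) (f T')" using assms(2,5) T'(1) by blast
      then show "T \<in> {T. E2 (f S) T}" using T'(2) by simp
    qed
    show "{T. E2 (f S) T} \<subseteq> f ` {T. E1 S T}"
    proof
      fix T assume "T \<in> {T. E2 (f S) T}"
      then have "T \<in> V2" "E2 (f S) T" using assms(4) by auto
      then obtain T' where T': "T' \<in> V1" "T = f T'" using assms(1) unfolding bij_betw_def by blast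
      then have "E1 S T'" using assms(2,5) \<open>E2 (f S) T\<close> by blast
      then show "T \<in> f ` {T. E1 S T}" using T'(2) by blast
    qed
  qed
  moreover have "{T. E1 S T} \<subseteq> V1" using assms(3) by blast
  then have "inj_on f {T. E1 S T}" using assms(1) unfolding bij_betw_def
    using inj_on_subset by blast
  ultimately show ?thesis by (simp add: card_image)
qed



lemma stuck_nfs:
  assumes "S \<subseteq> V" "S \<noteq> V" "\<And>u w. \<not> psd_force V E S u w"
  shows "\<not> psd_forcing_set V E S"
  using force_exists assms by blast

lemma K_simple: "simple_graph (K2q_V q) (K2q_E q)"
  unfolding simple_graph_def K2q_V_def K2q_E_def by auto

lemma lt2: "(y::nat) < 2 \<Longrightarrow> y = 0 \<or> y = 1" by auto

lemma K_noiso: assumes "q \<ge> 2" shows "no_isolated (K2q_V q) (K2q_E q)"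
  unfolding no_isolated_def K2q_V_def K2q_E_def
proof
  fix v assume v: "v \<in> {..<q + 2}"
  show "\<exists>u\<in>{..<q + 2}. v \<in> {..<q + 2} \<and> u \<in> {..<q + 2} \<and> (v < 2 \<and> 2 \<le> u \<or> 2 \<le> v \<and> u < 2)"
  proof (cases "v < 2")
    case True then show ?thesis using v assms by (intro bexI[of _ 2]) auto
  next
    case False then show ?thesis using v by (intro bexI[of _ 0]) auto
  qed
qed

lemma K_A_up:
  shows "{0,1} \<subseteq> T \<Longrightarrow> T \<subseteq> K2q_V q \<Longrightarrow> psd_forcing_set (K2q_V q) (K2q_E q) T"
proof (induction "card (K2q_V q - T)" arbitrary: T rule: less_induct)
  case less
  show ?case
  proof (cases "T = K2q_V q")
    case True
    then show ?thesis unfolding psd_forcing_set_def by auto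
  next
    case False
    then obtain w where w: "w \<in> K2q_V q" "w \<notin> T" using less.prems by blast
    then have w2: "2 \<le> w" using less.prems by (cases "w = 0 \<or> w = 1") auto
    have wc: "white_comp (K2q_V q) (K2q_E q) T w = {w}"
    proof (rule wc_single)
      show "w \<in> K2q_V q - T" using w by blast
      show "\<forall>y\<in>K2q_V q - T. \<not> K2q_E q w y"
      proof (intro ballI notI)
        fix y assume y: "y \<in> K2q_V q - T" "K2q_E q w y"
        then have "y < 2" using w2 unfolding K2q_E_def by auto
        then have "y = 0 \<or> y = 1" by (rule lt2)
        then show False using y(1) less.prems(1) by blast
      qed
    qed
    have z: "0 \<in> T" using less.prems(1) by blast
    have e: "K2q_E q 0 w" using w w2 z less.prems(2) unfolding K2q_E_def by auto
    have "psd_force (K2q_V q) (K2q_E q) T 0 w"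
      unfolding psd_force_def wc using w e z by blast
    moreover have "psd_forcing_set (K2q_V q) (K2q_E q) (insert w T)"
    proof (rule less.hyps)
      have "K2q_V q - insert w T \<subset> K2q_V q - T" using w by auto
      then show "card (K2q_V q - insert w T) < card (K2q_V q - T)"
        by (intro psubset_card_mono) (auto simp: K2q_V_def)
    qed (use less.prems w in auto)
    ultimately show ?thesis using force_step_fs[of "K2q_V q" "K2q_E q" T 0 w] less.prems(2) by blast
  qed
qed

lemma K_ab:
  assumes "q \<ge> 2" "a < 2" "2 \<le> b" "b < q + 2"
  shows "psd_forcing_set (K2q_V q) (K2q_E q) {a, b}"
proof -
  let ?a' = "1 - a"
  have a': "?a' < 2" "?a' \<noteq> a" "?a' \<noteq> b" using assms lt2[of a] by auto
  have wV: "?a' \<in> K2q_V q - {a, b}" using a' unfolding K2q_V_def by auto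
  have eb: "K2q_E q b ?a'" using assms a' unfolding K2q_E_def K2q_V_def by auto
  have only: "\<forall>x\<in>white_comp (K2q_V q) (K2q_E q) {a, b} ?a'. K2q_E q b x \<longrightarrow> x = ?a'"
  proof (intro ballI impI)
    fix x assume x: "x \<in> white_comp (K2q_V q) (K2q_E q) {a, b} ?a'" "K2q_E q b x"
    have "x \<in> K2q_V q - {a, b}" using wc_white[OF x(1) wV] .
    moreover have "x < 2" using x(2) assms(3) unfolding K2q_E_def by auto
    ultimately show "x = ?a'" using assms(2) by auto
  qed
  have "psd_force (K2q_V q) (K2q_E q) {a, b} b ?a'"
    unfolding psd_force_def using wV eb only by blast
  moreover have "psd_forcing_set (K2q_V q) (K2q_E q) (insert ?a' {a, b})"
  proof (rule K_A_up)
    show "{0, 1} \<subseteq> insert ?a' {a, b}" using assms(2) by auto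
    show "insert ?a' {a, b} \<subseteq> K2q_V q" using assms a' unfolding K2q_V_def by auto
  qed
  moreover have "{a, b} \<subseteq> K2q_V q" using assms unfolding K2q_V_def by auto
  ultimately show ?thesis using force_step_fs[of "K2q_V q" "K2q_E q" "{a,b}" b ?a'] by blast
qed

lemma K_B:
  assumes "q \<ge> 2"
  shows "psd_forcing_set (K2q_V q) (K2q_E q) {2..<q+2}"
proof -
  let ?V = "K2q_V q" and ?E = "K2q_E q"
  have wc1: "white_comp ?V ?E (insert 0 {2..<q+2}) 1 = {1}"
  proof (rule wc_single)
    show "1 \<in> ?V - insert 0 {2..<q + 2}" unfolding K2q_V_def by auto
    show "\<forall>y\<in>?V - insert 0 {2..<q + 2}. \<not> ?E 1 y" unfolding K2q_E_def K2q_V_def by auto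
  qed
  have e21: "?E 2 1" using assms unfolding K2q_E_def K2q_V_def by auto
  have "psd_force ?V ?E (insert 0 {2..<q+2}) 2 1"
    unfolding psd_force_def wc1 using e21 assms by (auto simp: K2q_V_def)
  moreover have "psd_forcing_set ?V ?E (insert 1 (insert 0 {2..<q+2}))"
    by (rule K_A_up) (auto simp: K2q_V_def)
  moreover have "insert 0 {2..<q+2} \<subseteq> ?V" unfolding K2q_V_def by auto
  ultimately have f1: "psd_forcing_set ?V ?E (insert 0 {2..<q+2})"
    using force_step_fs[of ?V ?E "insert 0 {2..<q+2}" 2 1] by blast
  have wc0: "white_comp ?V ?E {2..<q+2} 0 = {0}"
  proof (rule wc_single)
    show "0 \<in> ?V - {2..<q + 2}" unfolding K2q_V_def by auto
    show "\<forall>y\<in>?V - {2..<q + 2}. \<not> ?E 0 y" unfolding K2q_E_def K2q_V_def by auto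
  qed
  have e20: "?E 2 0" using assms unfolding K2q_E_def K2q_V_def by auto
  have "psd_force ?V ?E {2..<q+2} 2 0"
    unfolding psd_force_def wc0 using e20 assms by (auto simp: K2q_V_def)
  moreover have "{2..<q+2} \<subseteq> ?V" unfolding K2q_V_def by auto
  ultimately show ?thesis using force_step_fs[of ?V ?E "{2..<q+2}" 2 0] f1 by blast
qed

lemma K_nonempty: "\<not> psd_forcing_set (K2q_V q) (K2q_E q) {}"
proof (rule stuck_nfs)
  show "{} \<subseteq> K2q_V q" by simp
  show "{} \<noteq> K2q_V q" unfolding K2q_V_def by auto
  fix u w show "\<not> psd_force (K2q_V q) (K2q_E q) {} u w" unfolding psd_force_def by simp
qed

lemma K_nonsingle:
  assumes "q \<ge> 2" "a < 2"
  shows "\<not> psd_forcing_set (K2q_V q) (K2q_E q) {a}"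
proof (rule stuck_nfs)
  show aV: "{a} \<subseteq> K2q_V q" using assms unfolding K2q_V_def by auto
  have "2 \<in> K2q_V q" "2 \<notin> {a}" using assms unfolding K2q_V_def by auto
  then show "{a} \<noteq> K2q_V q" by blast
  fix u w
  show "\<not> psd_force (K2q_V q) (K2q_E q) {a} u w"
  proof
    assume f: "psd_force (K2q_V q) (K2q_E q) {a} u w"
    then have u: "u = a" and w: "w \<in> K2q_V q" "w \<noteq> a" "K2q_E q a w"
      unfolding psd_force_def by auto
    then have w2: "2 \<le> w" using assms unfolding K2q_E_def by auto
    define x where "x = (if w = 2 then 3 else (2::nat))"
    have x: "2 \<le> x" "x < q + 2" "x \<noteq> w" using assms unfolding x_def by auto
    let ?a' = "1 - a"
    have w': "w \<in> K2q_V q - {a}" using w by blast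
    have a'V: "?a' \<in> K2q_V q - {a}" using assms lt2[of a] unfolding K2q_V_def by auto
    have xV: "x \<in> K2q_V q - {a}" using x assms unfolding K2q_V_def by auto
    have a'2: "?a' < 2" by simp
    have e1: "K2q_E q w ?a'" unfolding K2q_E_def using w' a'V w2 a'2 by blast
    have e2: "K2q_E q ?a' x" unfolding K2q_E_def using xV a'V x(1) a'2 by blast
    have "w \<in> white_comp (K2q_V q) (K2q_E q) {a} w" using wc_refl w' by metis
    then have "?a' \<in> white_comp (K2q_V q) (K2q_E q) {a} w"
      using wc_edge a'V w' e1 by metis
    then have c: "x \<in> white_comp (K2q_V q) (K2q_E q) {a} w"
      using wc_edge a'V xV e2 by metis
    have aK: "a \<in> K2q_V q" using aV by simp
    have e3: "K2q_E q u x" unfolding K2q_E_def u using xV x(1) assms(2) aK by simp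
    have "\<not> psd_force (K2q_V q) (K2q_E q) {a} u w" by (rule no_force_by[OF c e3 x(3)])
    then show False using f by contradiction
  qed
qed

lemma K_nonsub:
  assumes "q \<ge> 2" "T \<subset> {2..<q+2}"
  shows "\<not> psd_forcing_set (K2q_V q) (K2q_E q) T"
proof (rule stuck_nfs)
  show TV: "T \<subseteq> K2q_V q" using assms unfolding K2q_V_def by auto
  have "0 \<notin> T" using assms by auto
  then show "T \<noteq> K2q_V q" unfolding K2q_V_def by auto
  fix u w
  show "\<not> psd_force (K2q_V q) (K2q_E q) T u w"
  proof
    assume f: "psd_force (K2q_V q) (K2q_E q) T u w"
    then have u: "u \<in> T" and w: "w \<in> K2q_V q - T" "K2q_E q u w"
      unfolding psd_force_def by auto
    have u2: "2 \<le> u" using u assms by auto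
    have w2: "w < 2" using w(2) u2 unfolding K2q_E_def by auto
    obtain b where b: "b \<in> {2..<q+2}" "b \<notin> T" using assms by blast
    let ?x = "1 - w"
    have bV: "b \<in> K2q_V q - T" using b unfolding K2q_V_def by auto
    have "?x < 2" by auto
    then have "?x \<notin> T" using assms by auto
    then have xV: "?x \<in> K2q_V q - T" unfolding K2q_V_def by auto
    have b2: "2 \<le> b" using b by simp
    have x2: "?x < 2" by simp
    have e1: "K2q_E q w b" unfolding K2q_E_def using w(1) bV w2 b2 by blast
    have e2: "K2q_E q b ?x" unfolding K2q_E_def using xV bV x2 b2 by blast
    have "w \<in> white_comp (K2q_V q) (K2q_E q) T w" using wc_refl w(1) by metis
    then have "b \<in> white_comp (K2q_V q) (K2q_E q) T w"
      using wc_edge w(1) bV e1 by metis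
    then have "?x \<in> white_comp (K2q_V q) (K2q_E q) T w"
      using wc_edge bV xV e2 by metis
    moreover have "K2q_E q u ?x" unfolding K2q_E_def using u2 x2 TV u xV by auto
    moreover have "?x \<noteq> w" using w2 lt2[of w] by auto
    ultimately have "\<not> psd_force (K2q_V q) (K2q_E q) T u w" by (rule no_force_by)
    then show False using f by contradiction
  qed
qed


locale gset =
  fixes V :: "'a set" and E :: "'a \<Rightarrow> 'a \<Rightarrow> bool" and S0 :: "'a set" and q :: nat and a a' :: 'a
  assumes sg: "simple_graph V E" and ni: "no_isolated V E"
    and aS: "a \<notin> S0" and a'S: "a' \<notin> S0" and aa': "a \<noteq> a'"
    and Veq: "V = insert a (insert a' S0)" and cS: "card S0 = q" and q2: "q \<ge> 2"
    and fS0: "psd_forcing_set V E S0"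
    and fA: "\<And>X. X \<subseteq> V \<Longrightarrow> 2 \<le> card X \<Longrightarrow> \<not> X \<subseteq> S0 \<Longrightarrow> psd_forcing_set V E X"
    and nS: "\<And>X. X \<subset> S0 \<Longrightarrow> \<not> psd_forcing_set V E X"
    and n1: "\<And>X. card X \<le> 1 \<Longrightarrow> \<not> psd_forcing_set V E X"
begin

lemma swap: "gset V E S0 q a' a"
  by (unfold_locales) (use sg ni aS a'S aa' Veq cS q2 fS0 fA nS n1 in \<open>auto simp: insert_commute\<close>)

lemma finV: "finite V" using sg unfolding simple_graph_def by blast
lemma S0V: "S0 \<subseteq> V" using Veq by blast
lemma finS0: "finite S0" using finV S0V finite_subset by blast
lemma aV: "a \<in> V" and a'V: "a' \<in> V" using Veq by blast+
lemma sym: "E x y \<Longrightarrow> E y x" using sg unfolding simple_graph_def by blast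
lemma irr: "\<not> E x x" using sg unfolding simple_graph_def by blast
lemma Ein: "E x y \<Longrightarrow> x \<in> V \<and> y \<in> V" using sg unfolding simple_graph_def by blast
lemma S0ne: "S0 \<noteq> {}" using cS q2 by auto

lemma white1: "b \<in> S0 \<Longrightarrow> V - (S0 - {b}) = {a, a', b}"
  using Veq aS a'S by auto

lemma H1:
  assumes b: "b \<in> S0"
  shows "\<not> psd_force V E (S0 - {b}) u w"
proof
  assume f: "psd_force V E (S0 - {b}) u w"
  then have w: "w \<in> V - (S0 - {b})" unfolding psd_force_def by blast
  have "psd_forcing_set V E (insert w (S0 - {b}))"
  proof (cases "w = b")
    case True
    then have "insert w (S0 - {b}) = S0" using b by blast
    then show ?thesis using fS0 by simp
  next
    case False
    then have wS: "w \<notin> S0" using w by blast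
    have c1: "card (S0 - {b}) = q - 1" using b cS finS0 by simp
    have "card (insert w (S0 - {b})) = q" using c1 wS finS0 q2 by simp
    moreover have "insert w (S0 - {b}) \<subseteq> V" using w S0V by blast
    ultimately show ?thesis using fA wS q2 by simp
  qed
  then have "psd_forcing_set V E (S0 - {b})" using force_step_fs[OF f] S0V by blast
  moreover have "S0 - {b} \<subset> S0" using b by blast
  ultimately show False using nS by blast
qed

lemma H2: "\<exists>u w. psd_force V E S0 u w"
  using force_exists[OF fS0] aS aV by blast

lemma H3:
  assumes b: "b \<in> S0"
  shows "\<exists>u w. psd_force V E {a, b} u w"
proof (rule force_exists)
  have ab: "a \<noteq> b" using aS b by blast
  show "psd_forcing_set V E {a, b}"
  proof (rule fA)
    show "{a, b} \<subseteq> V" using aV b S0V by blast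
    show "2 \<le> card {a, b}" using ab by simp
    show "\<not> {a, b} \<subseteq> S0" using aS by blast
  qed
  have "a' \<notin> {a, b}" using aa' a'S b by blast
  then show "{a, b} \<noteq> V" using a'V by blast
qed

lemma H4: "\<exists>u w. psd_force V E {a, a'} u w"
proof (rule force_exists)
  show "psd_forcing_set V E {a, a'}"
  proof (rule fA)
    show "{a, a'} \<subseteq> V" using aV a'V by blast
    show "2 \<le> card {a, a'}" using aa' by simp
    show "\<not> {a, a'} \<subseteq> S0" using aS by blast
  qed
  obtain b where "b \<in> S0" using S0ne by blast
  then have "b \<notin> {a, a'}" using aS a'S by blast
  then show "{a, a'} \<noteq> V" using S0V \<open>b \<in> S0\<close> by blast
qed

lemma L1:
  assumes n: "\<not> E a a'" and b: "b \<in> S0"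
  shows "E a b"
proof (rule ccontr)
  assume nab: "\<not> E a b"
  let ?B = "S0 - {b}"
  have aw: "a \<in> V - ?B" using aV aS by blast
  have wc: "white_comp V E ?B a = {a}"
  proof (rule wc_single[OF aw])
    show "\<forall>y\<in>V - ?B. \<not> E a y" unfolding white1[OF b] using n nab irr[of a] by simp
  qed
  obtain u where u: "u \<in> V" "E a u" using ni aV unfolding no_isolated_def by blast
  have "u \<noteq> a" "u \<noteq> a'" "u \<noteq> b" using u(2) irr n nab by blast+
  then have uB: "u \<in> ?B" using u(1) Veq by blast
  have "psd_force V E ?B u a" unfolding psd_force_def wc using uB aw sym[OF u(2)] by blast
  then show False using H1[OF b] by blast
qed

lemma L1':
  assumes n: "\<not> E a a'" and b: "b \<in> S0"
  shows "E a' b"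
proof -
  have "\<not> E a' a" using n sym by blast
  then show ?thesis using gset.L1[OF swap] b by blast
qed

lemma L2:
  assumes n: "\<not> E a a'" and b: "b \<in> S0" and b': "b' \<in> S0" and bb': "b \<noteq> b'" and e: "E b b'"
  shows False
proof (cases "q \<ge> 3")
  case True
  obtain u w where f: "psd_force V E {a, b} u w" using H3[OF b] by blast
  let ?B = "{a, b}"
  have u: "u \<in> ?B" and w: "w \<in> V - ?B" and euw: "E u w" using f unfolding psd_force_def by blast+
  have wh: "x = a' \<or> x \<in> S0 - {b}" if "x \<in> V - ?B" for x using that Veq by blast
  have a'w: "a' \<in> V - ?B" using a'V aa' a'S b by blast
  have a'c: "a' \<in> white_comp V E ?B w"
  proof (cases "w = a'")
    case True then show ?thesis using wc_refl[where E=E, OF w] by simp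
  next
    case False
    then have "w \<in> S0" using wh[OF w] by blast
    then have "E w a'" using L1'[OF n] sym by blast
    then show ?thesis using wc_edge[OF wc_refl[where E=E, OF w] a'w w] by blast
  qed
  have all: "x \<in> white_comp V E ?B w" if x: "x \<in> V - ?B" for x
  proof (cases "x = a'")
    case True then show ?thesis using a'c by simp
  next
    case False
    then have "x \<in> S0" using wh[OF x] by blast
    then have "E a' x" using L1'[OF n] by blast
    then show ?thesis using wc_edge[OF a'c x a'w] by blast
  qed
  show False
  proof (cases "u = a")
    case True
    then have "w \<noteq> a'" using euw n by blast
    then have wS: "w \<in> S0 - {b}" using wh[OF w] by blast
    have "card (S0 - {b, w}) \<ge> 1"
    proof -
      have "card (S0 - {b, w}) \<ge> card S0 - card {b, w}" by (rule diff_card_le_card_Diff) simp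
      moreover have "card {b, w} \<le> 2" by (rule card_insert_le_m1) auto
      ultimately show ?thesis using cS \<open>q \<ge> 3\<close> by linarith
    qed
    then obtain x where x: "x \<in> S0 - {b, w}" by (metis all_not_in_conv card.empty not_one_le_zero)
    have xw: "x \<in> V - ?B" using x S0V aS by blast
    have "E u x" using True L1[OF n] x by blast
    moreover have "x \<noteq> w" using x by blast
    ultimately have "\<not> psd_force V E ?B u w" using no_force_by[OF all[OF xw]] by blast
    then show False using f by contradiction
  next
    case False
    then have ub: "u = b" using u by blast
    define x where "x = (if w = a' then b' else a')"
    have xw: "x \<in> V - ?B" unfolding x_def using a'w b' bb' S0V aS by auto
    have "E u x" unfolding x_def ub using e L1'[OF n b] sym by auto
    moreover have "x \<noteq> w" unfolding x_def using b' a'S by auto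
    ultimately have "\<not> psd_force V E ?B u w" using no_force_by[OF all[OF xw]] by blast
    then show False using f by contradiction
  qed
next
  case False
  then have q: "q = 2" using q2 by linarith
  obtain u w where f: "psd_force V E {a, a'} u w" using H4 by blast
  have u: "u \<in> {a, a'}" and w: "w \<in> V - {a, a'}" and euw: "E u w" using f unfolding psd_force_def by blast+
  have S0eq: "S0 = {b, b'}"
  proof -
    have "{b, b'} \<subseteq> S0" using b b' by blast
    moreover have "card {b, b'} = card S0" using bb' cS q by simp
    ultimately show ?thesis using finS0 card_subset_eq by metis
  qed
  have wS: "w \<in> S0" using w Veq by blast
  define x where "x = (if w = b then b' else b)"
  have xS: "x \<in> S0" unfolding x_def using b b' by auto
  have xw: "x \<in> V - {a, a'}" using xS S0V aS a'S by blast
  have ewx: "E w x" unfolding x_def using wS S0eq e sym bb' by auto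
  have xc: "x \<in> white_comp V E {a, a'} w" using wc_edge[OF wc_refl[where E=E, OF w] xw w ewx] .
  have "E u x" using u L1[OF n xS] L1'[OF n xS] by blast
  moreover have "x \<noteq> w" unfolding x_def using wS S0eq bb' by auto
  ultimately have "\<not> psd_force V E {a, a'} u w" using no_force_by[OF xc] by blast
  then show False using f by contradiction
qed

lemma cardV: "card V = q + 2"
  using Veq aS a'S aa' cS finS0 by simp

lemma iso_noedge:
  assumes n: "\<not> E a a'"
  shows "graph_iso V E (K2q_V q) (K2q_E q)"
proof -
  have Echar: "E x y \<longleftrightarrow> (x \<in> {a, a'} \<and> y \<in> S0) \<or> (x \<in> S0 \<and> y \<in> {a, a'})"
    if xy: "x \<in> V" "y \<in> V" for x y
  proof
    assume e: "E x y"
    show "(x \<in> {a, a'} \<and> y \<in> S0) \<or> (x \<in> S0 \<and> y \<in> {a, a'})"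
    proof (rule ccontr)
      assume c: "\<not> ?thesis"
      have xy': "x \<in> {a, a'} \<or> x \<in> S0" "y \<in> {a, a'} \<or> y \<in> S0" using xy Veq by blast+
      show False
      proof (cases "x \<in> S0")
        case True
        then have "y \<in> S0" using c xy'(2) by blast
        moreover have "x \<noteq> y" using e irr by blast
        ultimately show False using L2[OF n True _ _ e] by blast
      next
        case False
        then have "x \<in> {a, a'}" "y \<in> {a, a'}" using c xy' by blast+
        then show False using e irr n sym by blast
      qed
    qed
  next
    assume "(x \<in> {a, a'} \<and> y \<in> S0) \<or> (x \<in> S0 \<and> y \<in> {a, a'})"
    then show "E x y" using L1[OF n] L1'[OF n] sym by blast
  qed
  obtain g where g: "bij_betw g S0 {0..<q}" using ex_bij_betw_finite_nat[OF finS0] cS by metis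
  define f where "f x = (if x = a then 0 else if x = a' then 1 else g x + 2)" for x
  have fS0: "f ` S0 = {2..<q+2}"
  proof -
    have "f ` S0 = (\<lambda>x. g x + 2) ` S0"
      by (rule image_cong) (use aS a'S in \<open>auto simp: f_def\<close>)
    also have "\<dots> = (\<lambda>n. n + 2) ` (g ` S0)" by (simp add: image_image)
    also have "g ` S0 = {0..<q}" using g unfolding bij_betw_def by blast
    also have "(\<lambda>n. n + 2) ` {0..<q} = {0 + 2..<q + 2}" by (rule image_add_atLeastLessThan')
    finally show ?thesis by (simp add: numeral_2_eq_2)
  qed
  have fV: "f ` V = K2q_V q"
  proof -
    have "f a = 0" "f a' = 1" using aa' by (simp_all add: f_def)
    then have "f ` V = insert 0 (insert 1 (f ` S0))" unfolding Veq by simp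
    also have "\<dots> = K2q_V q" unfolding fS0 K2q_V_def by auto
    finally show ?thesis .
  qed
  have "card (f ` V) = card V" unfolding fV cardV K2q_V_def by simp
  then have inj: "inj_on f V" using eq_card_imp_inj_on finV by blast
  have bij: "bij_betw f V (K2q_V q)" unfolding bij_betw_def using inj fV by blast
  have flt: "f x < 2 \<longleftrightarrow> x \<in> {a, a'}" if "x \<in> V" for x
    using that Veq by (auto simp: f_def)
  have fK: "f x \<in> K2q_V q" if "x \<in> V" for x using that fV by blast
  have "\<forall>x\<in>V. \<forall>y\<in>V. E x y \<longleftrightarrow> K2q_E q (f x) (f y)"
  proof (intro ballI)
    fix x y assume xy: "x \<in> V" "y \<in> V"
    have "K2q_E q (f x) (f y) \<longleftrightarrow> (f x < 2 \<and> 2 \<le> f y) \<or> (2 \<le> f x \<and> f y < 2)"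
      unfolding K2q_E_def using fK[OF xy(1)] fK[OF xy(2)] by blast
    also have "\<dots> \<longleftrightarrow> (x \<in> {a, a'} \<and> y \<notin> {a, a'}) \<or> (x \<notin> {a, a'} \<and> y \<in> {a, a'})"
      using flt[OF xy(1)] flt[OF xy(2)] by linarith
    also have "\<dots> \<longleftrightarrow> (x \<in> {a, a'} \<and> y \<in> S0) \<or> (x \<in> S0 \<and> y \<in> {a, a'})"
      using xy Veq aS a'S by blast
    finally show "E x y \<longleftrightarrow> K2q_E q (f x) (f y)" using Echar[OF xy] by blast
  qed
  then show ?thesis unfolding graph_iso_def using bij by blast
qed

lemma L3a:
  assumes b: "b \<in> S0"
  shows "E a b \<or> E a' b"
proof (rule ccontr)
  assume nn: "\<not> (E a b \<or> E a' b)"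
  let ?B = "S0 - {b}"
  have bw: "b \<in> V - ?B" using b S0V by blast
  have wc: "white_comp V E ?B b = {b}"
  proof (rule wc_single[OF bw])
    have "\<not> E b a" "\<not> E b a'" using nn sym by blast+
    then show "\<forall>y\<in>V - ?B. \<not> E b y" unfolding white1[OF b] using irr[of b] by simp
  qed
  obtain u where u: "u \<in> V" "E b u" using ni b S0V unfolding no_isolated_def by blast
  have "u \<noteq> a" "u \<noteq> a'" "u \<noteq> b" using u(2) irr nn sym by blast+
  then have uB: "u \<in> ?B" using u(1) Veq by blast
  have "psd_force V E ?B u b" unfolding psd_force_def wc using uB bw sym[OF u(2)] by blast
  then show False using H1[OF b] by blast
qed

lemma L3b:
  assumes u: "u \<in> S0" and ua: "E u a" and ua': "\<not> E u a'" and b: "b \<in> S0" and bu: "b \<noteq> u"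
  shows "E u b"
proof (rule ccontr)
  assume nub: "\<not> E u b"
  let ?B = "S0 - {b}"
  have aw: "a \<in> V - ?B" using aV aS by blast
  have uB: "u \<in> ?B" using u bu by blast
  have "\<forall>x\<in>white_comp V E ?B a. E u x \<longrightarrow> x = a"
  proof (intro ballI impI)
    fix x assume x: "x \<in> white_comp V E ?B a" "E u x"
    have "x \<in> {a, a', b}" using wc_white[OF x(1) aw] unfolding white1[OF b] .
    then show "x = a" using x(2) ua' nub by blast
  qed
  then have "psd_force V E ?B u a" unfolding psd_force_def using uB aw ua by blast
  then show False using H1[OF b] by blast
qed

lemma L3b':
  assumes u: "u \<in> S0" and ua: "E u a'" and ua': "\<not> E u a" and b: "b \<in> S0" and bu: "b \<noteq> u"
  shows "E u b"
  using gset.L3b[OF swap u ua ua' b bu] .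

lemma L3e:
  assumes aa: "E a a'" and q3: "q \<ge> 3" and b0: "b0 \<in> S0" and ab0: "E a b0"
    and nab: "\<forall>x\<in>S0 - {b0}. \<not> E a x"
  shows False
proof -
  have univ: "E b y" if "b \<in> S0 - {b0}" "y \<in> S0 - {b}" for b y
  proof -
    have "\<not> E a b" using nab that(1) by blast
    then have "E a' b" using L3a that(1) by blast
    then show ?thesis using L3b'[of b y] that sym \<open>\<not> E a b\<close> by blast
  qed
  have c2: "card (S0 - {b0}) \<ge> 2"
    using cS q3 b0 finS0 by simp
  obtain b where b: "b \<in> S0 - {b0}"
    using c2 by (metis all_not_in_conv card.empty not_numeral_le_zero)
  have "card (S0 - {b0} - {b}) \<ge> 1" using c2 b finS0 by simp
  then obtain c where c: "c \<in> S0 - {b0} - {b}"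
    by (metis all_not_in_conv card.empty not_one_le_zero)
  obtain u w where f: "psd_force V E {a, b} u w" using H3[of b] b by blast
  let ?B = "{a, b}"
  have u: "u \<in> ?B" and w: "w \<in> V - ?B" and euw: "E u w" using f unfolding psd_force_def by blast+
  have wh: "x = a' \<or> x \<in> S0 - {b}" if "x \<in> V - ?B" for x using that Veq by blast
  have a'w: "a' \<in> V - ?B" using a'V aa' a'S b by blast
  have cw: "c \<in> V - ?B" using c S0V aS by blast
  have b0w: "b0 \<in> V - ?B" using b0 b S0V aS by blast
  have ca': "E c a'" using L3a[of c] c nab sym by blast
  have bc: "E b c" using univ[OF b] c by blast
  have ba': "E b a'" using L3a[of b] b nab sym by blast
  have cb0: "E c b0" using univ[of c b0] c b0 by blast
  have cc: "c \<in> white_comp V E ?B w"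
  proof (cases "w = a'")
    case True
    then show ?thesis using wc_edge[OF wc_refl[where E=E, OF w] cw w] sym[OF ca'] by blast
  next
    case False
    then have wS: "w \<in> S0 - {b}" using wh[OF w] by blast
    show ?thesis
    proof (cases "w = c")
      case True then show ?thesis using wc_refl[where E=E, OF w] by simp
    next
      case False
      then have "E c w" using univ[of c w] c wS by blast
      then show ?thesis using wc_edge[OF wc_refl[where E=E, OF w] cw w] sym by blast
    qed
  qed
  have a'c: "a' \<in> white_comp V E ?B w" using wc_edge[OF cc a'w cw ca'] .
  have b0c: "b0 \<in> white_comp V E ?B w" using wc_edge[OF cc b0w cw cb0] .
  show False
  proof (cases "u = a")
    case True
    have wab: "w = a' \<or> w = b0"
    proof (rule ccontr)
      assume "\<not> (w = a' \<or> w = b0)"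
      then have "w \<in> S0 - {b0}" using wh[OF w] by blast
      then show False using nab euw True by blast
    qed
    define x where "x = (if w = a' then b0 else a')"
    have "x = b0 \<or> x = a'" unfolding x_def by simp
    then have xc: "x \<in> white_comp V E ?B w" using a'c b0c by blast
    have "E u x" unfolding x_def True using aa ab0 by simp
    moreover have "x \<noteq> w" unfolding x_def using wab b0 a'S by auto
    ultimately have "\<not> psd_force V E ?B u w" using no_force_by[OF xc] by blast
    then show False using f by contradiction
  next
    case False
    then have ub: "u = b" using u by blast
    define x where "x = (if w = a' then c else a')"
    have "x = c \<or> x = a'" unfolding x_def by simp
    then have xc: "x \<in> white_comp V E ?B w" using a'c cc by blast
    have "E u x" unfolding x_def ub using bc ba' by simp
    moreover have "x \<noteq> w" unfolding x_def using c a'S by auto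
    ultimately have "\<not> psd_force V E ?B u w" using no_force_by[OF xc] by blast
    then show False using f by contradiction
  qed
qed

lemma L3:
  assumes aa: "E a a'" and q3: "q \<ge> 3"
  shows False
proof -
  obtain u w where f: "psd_force V E S0 u w" using H2 by blast
  have u: "u \<in> S0" and w: "w \<in> V - S0" and euw: "E u w" using f unfolding psd_force_def by blast+
  have wA: "w = a \<or> w = a'" using w Veq by blast
  define oo where "oo = (if w = a then a' else a)"
  have ow: "oo \<in> V - S0" unfolding oo_def using aV a'V aS a'S by auto
  have ewo: "E w oo" unfolding oo_def using wA aa sym[OF aa] aa' by auto
  have oc: "oo \<in> white_comp V E S0 w" using wc_edge[OF wc_refl[where E=E, OF w] ow w ewo] .
  have ono: "oo \<noteq> w" unfolding oo_def using wA aa' by auto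
  have nuo: "\<not> E u oo"
  proof
    assume "E u oo"
    then have "\<not> psd_force V E S0 u w" using no_force_by[OF oc _ ono] by blast
    then show False using f by contradiction
  qed
  have univ: "E u y" if "y \<in> S0" "y \<noteq> u" for y
  proof (cases "w = a")
    case True
    then have "\<not> E u a'" using nuo unfolding oo_def by simp
    then show ?thesis using L3b[OF u _ _ that] euw True by blast
  next
    case False
    then have "w = a'" "\<not> E u a" using wA nuo unfolding oo_def by simp_all
    then show ?thesis using L3b'[OF u _ _ that] euw by blast
  qed
  obtain u0 b0 where f0: "psd_force V E {a, a'} u0 b0" using H4 by blast
  have u0: "u0 \<in> {a, a'}" and b0w: "b0 \<in> V - {a, a'}" and eub: "E u0 b0"
    and only: "\<forall>x\<in>white_comp V E {a, a'} b0. E u0 x \<longrightarrow> x = b0"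
    using f0 unfolding psd_force_def by blast+
  have b0: "b0 \<in> S0" using b0w Veq by blast
  have uw: "u \<in> V - {a, a'}" using u S0V aS a'S by blast
  have uc: "u \<in> white_comp V E {a, a'} b0"
  proof (cases "b0 = u")
    case True then show ?thesis using wc_refl[where E=E, OF b0w] by simp
  next
    case False
    then have "E b0 u" using univ b0 sym by blast
    then show ?thesis using wc_edge[OF wc_refl[where E=E, OF b0w] uw b0w] by blast
  qed
  have allc: "y \<in> white_comp V E {a, a'} b0" if "y \<in> S0" for y
  proof (cases "y = u")
    case True then show ?thesis using uc by simp
  next
    case False
    have yw: "y \<in> V - {a, a'}" using that S0V aS a'S by blast
    show ?thesis using wc_edge[OF uc yw uw univ[OF that False]] .
  qed
  have nab: "\<forall>x\<in>S0 - {b0}. \<not> E u0 x" using only allc by blast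
  show False
  proof (cases "u0 = a")
    case True
    then show False using L3e[OF aa q3 b0 _ ] eub nab by blast
  next
    case False
    then have "u0 = a'" using u0 by blast
    moreover have "E a' a" using aa sym by blast
    ultimately show False using gset.L3e[OF swap _ q3 b0] eub nab by blast
  qed
qed

lemma allF:
  assumes "q = 2" "X \<subseteq> V" "2 \<le> card X"
  shows "psd_forcing_set V E X"
proof (cases "X \<subseteq> S0")
  case True
  then have "X = S0" using assms cS finS0 card_subset_eq[OF finS0 True] card_mono[OF finS0 True] by simp
  then show ?thesis using fS0 by simp
next
  case False
  then show ?thesis using fA assms by blast
qed

lemma q2case:
  assumes q: "q = 2" and aa: "E a a'"
  shows "graph_iso V E (K2q_V q) (K2q_E q)"
proof -
  have "\<exists>x\<in>V. \<exists>y\<in>V. x \<noteq> y \<and> \<not> E x y"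
  proof (rule ccontr)
    assume "\<not> ?thesis"
    then have comp: "\<And>x y. x \<in> V \<Longrightarrow> y \<in> V \<Longrightarrow> x \<noteq> y \<Longrightarrow> E x y" by blast
    obtain u w where f: "psd_force V E {a, a'} u w" using H4 by blast
    have u: "u \<in> {a, a'}" and w: "w \<in> V - {a, a'}" using f unfolding psd_force_def by blast+
    have wS: "w \<in> S0" using w Veq by blast
    have "card (S0 - {w}) = 1" using cS q wS finS0 by simp
    then obtain x where x: "x \<in> S0 - {w}" by (metis all_not_in_conv card.empty zero_neq_one)
    have xw: "x \<in> V - {a, a'}" using x S0V aS a'S by blast
    have wV: "w \<in> V" and xV: "x \<in> V" and xnw: "x \<noteq> w" using w xw x by blast+
    have "E w x" by (rule comp[OF wV xV]) (use xnw in simp)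
    then have xc: "x \<in> white_comp V E {a, a'} w"
      using wc_edge[OF wc_refl[where E=E, OF w] xw w] by blast
    have uV: "u \<in> V" using u aV a'V by blast
    have "u \<noteq> x" using u xw by blast
    then have "E u x" by (rule comp[OF uV xV])
    moreover have "x \<noteq> w" using x by blast
    ultimately have "\<not> psd_force V E {a, a'} u w" using no_force_by[OF xc] by blast
    then show False using f by contradiction
  qed
  then obtain x y where xy: "x \<in> V" "y \<in> V" "x \<noteq> y" "\<not> E x y" by blast
  have c4: "card V = 4" using cardV q by simp
  have cxy: "card (V - {x, y}) = 2" using c4 xy finV by (simp add: card_Diff_subset)
  have "gset V E (V - {x, y}) 2 x y"
  proof (unfold_locales)
    show "simple_graph V E" by (rule sg)
    show "no_isolated V E" by (rule ni)
    show "x \<notin> V - {x, y}" "y \<notin> V - {x, y}" "x \<noteq> y" using xy by blast+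
    show "V = insert x (insert y (V - {x, y}))" using xy by blast
    show "card (V - {x, y}) = 2" by (rule cxy)
    show "2 \<le> (2::nat)" by simp
    show "psd_forcing_set V E (V - {x, y})" by (rule allF[OF q]) (use cxy in auto)
    show "psd_forcing_set V E X" if "X \<subseteq> V" "2 \<le> card X" "\<not> X \<subseteq> V - {x, y}" for X
      by (rule allF[OF q that(1,2)])
    show "\<not> psd_forcing_set V E X" if "X \<subset> V - {x, y}" for X
    proof -
      have "finite (V - {x, y})" using finV by simp
      then have "card X < 2" using psubset_card_mono[OF _ that] cxy by simp
      then show ?thesis using n1[of X] by simp
    qed
    show "\<not> psd_forcing_set V E X" if "card X \<le> 1" for X by (rule n1[OF that])
  qed
  then have "graph_iso V E (K2q_V 2) (K2q_E 2)" by (rule gset.iso_noedge) (rule xy(4))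
  then show ?thesis using q by simp
qed

lemma final: "graph_iso V E (K2q_V q) (K2q_E q)"
proof (cases "E a a'")
  case True
  show ?thesis
  proof (cases "q = 2")
    case True
    then show ?thesis using q2case \<open>E a a'\<close> by blast
  next
    case False
    then show ?thesis using L3 \<open>E a a'\<close> q2 by simp
  qed
next
  case False
  then show ?thesis by (rule iso_noedge)
qed

end


lemma card_le1_cases: assumes "finite T" "card T \<le> 1" shows "T = {} \<or> (\<exists>x. T = {x})"
proof (cases "card T = 0")
  case True then show ?thesis using assms(1) by simp
next
  case False
  then have "card T = 1" using assms(2) by simp
  then show ?thesis using card_1_singletonE by blast
qed

lemma K_card2:
  assumes q: "q \<ge> 2" and f: "psd_forcing_set (K2q_V q) (K2q_E q) T"
  shows "2 \<le> card T"
proof (rule ccontr)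
  assume "\<not> 2 \<le> card T"
  then have c: "card T \<le> 1" by simp
  have "T \<subseteq> {..<q+2}" using f unfolding psd_forcing_set_def K2q_V_def by simp
  then have fin: "finite T" by (rule finite_subset[OF _ finite_lessThan])
  from card_le1_cases[OF fin c] show False
  proof
    assume "T = {}" then show False using f K_nonempty by simp
  next
    assume "\<exists>x. T = {x}"
    then obtain x where x: "T = {x}" by blast
    have xV: "x < q + 2" using \<open>T \<subseteq> {..<q+2}\<close> x by simp
    show False
    proof (cases "x < 2")
      case True then show False using K_nonsingle[OF q True] f x by simp
    next
      case False
      define y where "y = (if x = 2 then 3 else (2::nat))"
      have "y \<in> {2..<q+2}" "y \<noteq> x" using q False unfolding y_def by auto
      moreover have "x \<in> {2..<q+2}" using False xV by simp
      ultimately have "{x} \<subset> {2..<q+2}" by blast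
      then show False using K_nonsub[OF q] f x by simp
    qed
  qed
qed

lemma K_F:
  assumes q: "q \<ge> 2"
  shows "psd_tar_V (K2q_V q) (K2q_E q) = Pow (K2q_V q) - ({{0},{1}} \<union> (Pow {2..<q+2} - {{2..<q+2}}))"
proof
  show "psd_tar_V (K2q_V q) (K2q_E q) \<subseteq> Pow (K2q_V q) - ({{0},{1}} \<union> (Pow {2..<q+2} - {{2..<q+2}}))"
  proof
    fix T assume "T \<in> psd_tar_V (K2q_V q) (K2q_E q)"
    then have f: "psd_forcing_set (K2q_V q) (K2q_E q) T" unfolding psd_tar_V_def by simp
    have "T \<subseteq> K2q_V q" using f unfolding psd_forcing_set_def by simp
    moreover have "T \<noteq> {0}" "T \<noteq> {1}" using K_nonsingle[OF q, of 0] K_nonsingle[OF q, of 1] f by auto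
    moreover have "\<not> T \<subset> {2..<q+2}" using K_nonsub[OF q] f by blast
    ultimately show "T \<in> Pow (K2q_V q) - ({{0},{1}} \<union> (Pow {2..<q+2} - {{2..<q+2}}))" by blast
  qed
  show "Pow (K2q_V q) - ({{0},{1}} \<union> (Pow {2..<q+2} - {{2..<q+2}})) \<subseteq> psd_tar_V (K2q_V q) (K2q_E q)"
  proof
    fix T assume T: "T \<in> Pow (K2q_V q) - ({{0},{1}} \<union> (Pow {2..<q+2} - {{2..<q+2}}))"
    then have TV: "T \<subseteq> K2q_V q" and n01: "T \<noteq> {0}" "T \<noteq> {1}"
      and nB: "\<not> (T \<subseteq> {2..<q+2} \<and> T \<noteq> {2..<q+2})" by blast+
    have "psd_forcing_set (K2q_V q) (K2q_E q) T"
    proof (cases "{2..<q+2} \<subseteq> T")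
      case True
      show ?thesis using fs_up[OF K_B[OF q] True TV] by simp
    next
      case False
      then have "\<not> T \<subseteq> {2..<q+2}" using nB by blast
      then obtain x where x: "x \<in> T" "x \<notin> {2..<q+2}" by blast
      then have x2: "x < 2" using TV unfolding K2q_V_def by auto
      have "T \<noteq> {x}" using n01 x2 lt2[of x] by auto
      then obtain y where y: "y \<in> T" "y \<noteq> x" using x(1) by blast
      show ?thesis
      proof (cases "y < 2")
        case True
        then have "{0, 1} \<subseteq> T" using x y x2 lt2[of x] lt2[of y] by auto
        then show ?thesis using K_A_up TV by blast
      next
        case False
        have yV: "y < q + 2" using y TV unfolding K2q_V_def by auto
        have "psd_forcing_set (K2q_V q) (K2q_E q) {x, y}" using K_ab[OF q x2 _ yV] False by simp
        then show ?thesis using fs_up TV x y by blast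
      qed
    qed
    then show "T \<in> psd_tar_V (K2q_V q) (K2q_E q)" unfolding psd_tar_V_def by simp
  qed
qed

lemma card_M:
  assumes "finite S" "p1 \<noteq> p2" "p1 \<notin> S" "p2 \<notin> S"
  shows "card ({{p1},{p2}} \<union> (Pow S - {S})) = 2 ^ card S + 1"
proof -
  have d: "{{p1},{p2}} \<inter> (Pow S - {S}) = {}" using assms by auto
  have c1: "card {{p1},{p2}} = 2" using assms by simp
  have c2: "card (Pow S - {S}) = 2 ^ card S - 1" using assms(1) by (simp add: card_Diff_singleton card_Pow)
  have "card ({{p1},{p2}} \<union> (Pow S - {S})) = card {{p1},{p2}} + card (Pow S - {S})"
    using d assms(1) by (intro card_Un_disjoint) auto
  then show ?thesis using c1 c2 by (simp add: Suc_leI)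
qed

lemma card_PowM:
  assumes "finite U" "M \<subseteq> Pow U"
  shows "card (Pow U - M) = 2 ^ card U - card M"
proof -
  have "finite M" using assms finite_subset by blast
  then show ?thesis using assms by (simp add: card_Diff_subset card_Pow)
qed


lemma symd_compl:
  assumes "U \<subseteq> W"
  shows "(U - (T \<union> (W - U))) \<union> ((T \<union> (W - U)) - U) = (W - (U \<inter> T)) \<union> (T - W)"
  using assms by blast

lemma card_symd_compl:
  assumes "finite W" "U \<subseteq> W" "T \<subseteq> W"
  shows "card ((U - (T \<union> (W - U))) \<union> ((T \<union> (W - U)) - U)) = card W - card (U \<inter> T)"
proof -
  have "(U - (T \<union> (W - U))) \<union> ((T \<union> (W - U)) - U) = W - (U \<inter> T)"
    using symd_compl[OF assms(2), of T] assms(3) by blast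
  moreover have "U \<inter> T \<subseteq> W" using assms by blast
  ultimately show ?thesis using assms(1) by (simp add: card_Diff_subset finite_subset)
qed

lemma card_symd_sub:
  assumes "finite W" "S \<subseteq> W"
  shows "card ((W - S) \<union> (S - W)) = card W - card S"
proof -
  have "(W - S) \<union> (S - W) = W - S" using assms by blast
  then show ?thesis using assms by (simp add: card_Diff_subset finite_subset)
qed

lemma adj_smaller:
  assumes "finite A" "finite C" "card ((A - C) \<union> (C - A)) = 1" "card C < card A"
  shows "C \<subset> A"
proof -
  have d: "(A - C) \<inter> (C - A) = {}" by blast
  have s: "card (A - C) + card (C - A) = 1" using assms(3) d assms(1,2) by (simp add: card_Un_disjoint)
  have "C - A = {}"
  proof (rule ccontr)
    assume "C - A \<noteq> {}"
    then have "card (C - A) \<ge> 1" using assms(2) by (simp add: Suc_leI card_gt_0_iff)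
    then have "card (A - C) = 0" using s by simp
    then have "A \<subseteq> C" using assms(1) by simp
    then have "card A \<le> card C" using assms(2) card_mono by blast
    then show False using assms(4) by simp
  qed
  then have "C \<subseteq> A" by blast
  moreover have "C \<noteq> A" using assms(4) by blast
  ultimately show ?thesis by blast
qed


theorem proposition4p6:
  fixes q :: nat and V :: "'a set" and E :: "'a \<Rightarrow> 'a \<Rightarrow> bool"
  assumes "q \<ge> 2"
    and "simple_graph V E"
    and "no_isolated V E"
    and "graph_iso (psd_tar_V V E) (psd_tar_E V E) (psd_tar_V (K2q_V q) (K2q_E q)) (psd_tar_E (K2q_V q) (K2q_E q))"
  shows "graph_iso V E (K2q_V q) (K2q_E q)"
proof -
  note q = assms(1) and sg = assms(2) and ni = assms(3)
  let ?XK = "K2q_V q" and ?EK = "K2q_E q"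
  let ?FG = "psd_tar_V V E" and ?RG = "psd_tar_E V E"
  let ?FK = "psd_tar_V ?XK ?EK" and ?RK = "psd_tar_E ?XK ?EK"
  obtain \<phi> where phib: "bij_betw \<phi> ?FG ?FK" and phie: "\<forall>x\<in>?FG. \<forall>y\<in>?FG. ?RG x y \<longleftrightarrow> ?RK (\<phi> x) (\<phi> y)"
    using assms(4) unfolding graph_iso_def by blast
  define \<psi> where "\<psi> = inv_into ?FG \<phi>"
  have psib: "bij_betw \<psi> ?FK ?FG" unfolding \<psi>_def using phib by (rule bij_betw_inv_into)
  have psiphi: "\<psi> (\<phi> S) = S" if "S \<in> ?FG" for S
    unfolding \<psi>_def using phib that bij_betw_inv_into_left by metis
  have phipsi: "\<phi> (\<psi> T) = T" if "T \<in> ?FK" for T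
    unfolding \<psi>_def using phib that bij_betw_inv_into_right by metis
  have phiF: "\<phi> S \<in> ?FK" if "S \<in> ?FG" for S using phib that bij_betwE by blast
  have psiF: "\<psi> T \<in> ?FG" if "T \<in> ?FK" for T using psib that bij_betwE by blast
  have psie: "\<forall>x\<in>?FK. \<forall>y\<in>?FK. ?RK x y \<longleftrightarrow> ?RG (\<psi> x) (\<psi> y)"
  proof (intro ballI)
    fix x y assume xy: "x \<in> ?FK" "y \<in> ?FK"
    have "?RG (\<psi> x) (\<psi> y) \<longleftrightarrow> ?RK (\<phi> (\<psi> x)) (\<phi> (\<psi> y))" using phie psiF[OF xy(1)] psiF[OF xy(2)] by blast
    then show "?RK x y \<longleftrightarrow> ?RG (\<psi> x) (\<psi> y)" using phipsi[OF xy(1)] phipsi[OF xy(2)] by simp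
  qed
  have RGin: "\<forall>x y. ?RG x y \<longrightarrow> x \<in> ?FG \<and> y \<in> ?FG" unfolding psd_tar_E_def by blast
  have RKin: "\<forall>x y. ?RK x y \<longrightarrow> x \<in> ?FK \<and> y \<in> ?FK" unfolding psd_tar_E_def by blast
  have trG: "(?RK ^^ k) (\<phi> x) (\<phi> y)" if "(?RG ^^ k) x y" for k x y
    using relpow_transfer[of ?RG ?FG ?RK \<phi>, OF RGin phie that] .
  have trK: "(?RG ^^ k) (\<psi> x) (\<psi> y)" if "(?RK ^^ k) x y" for k x y
    using relpow_transfer[of ?RK ?FK ?RG \<psi>, OF RKin psie that] .
  have finV: "finite V" using sg unfolding simple_graph_def by blast
  have finK: "finite ?XK" unfolding K2q_V_def by simp
  have cK: "card ?XK = q + 2" unfolding K2q_V_def by simp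
  have sgK: "simple_graph ?XK ?EK" by (rule K_simple)
  have niK: "no_isolated ?XK ?EK" by (rule K_noiso[OF q])
  have VF: "V \<in> ?FG" unfolding psd_tar_V_def psd_forcing_set_def by simp
  have XKF: "?XK \<in> ?FK" unfolding psd_tar_V_def psd_forcing_set_def by simp
  have cV: "card V = q + 2"
  proof -
    have d1: "card {T. ?RK (\<phi> V) T} = card {T. ?RG V T}"
      by (rule iso_deg[OF phib phie RGin RKin VF])
    have d2: "card {T. ?RG V T} = card V" by (rule deg_full[OF sg ni])
    have d3: "card {T. ?RK (\<phi> V) T} \<le> q + 2" using deg_le[OF finK, of ?EK "\<phi> V"] cK by simp
    have e1: "card {T. ?RG (\<psi> ?XK) T} = card {T. ?RK ?XK T}"
      by (rule iso_deg[OF psib psie RKin RGin XKF])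
    have e2: "card {T. ?RK ?XK T} = q + 2" using deg_full[OF sgK niK] cK by simp
    have e3: "card {T. ?RG (\<psi> ?XK) T} \<le> card V" using deg_le[OF finV, of E "\<psi> ?XK"] by simp
    show ?thesis using d1 d2 d3 e1 e2 e3 by linarith
  qed
  have G2: "2 \<le> card T" if T: "T \<in> ?FG" for T
  proof -
    let ?U = "\<psi> ?XK"
    have UF: "?U \<in> ?FG" using psiF[OF XKF] .
    have UV: "?U \<subseteq> V" using tarV_sub[OF UF] .
    have TV: "T \<subseteq> V" using tarV_sub[OF T] .
    let ?T2 = "T \<union> (V - ?U)"
    have T2F: "?T2 \<in> ?FG"
      using fs_up[of V E T ?T2] T TV unfolding psd_tar_V_def by blast
    have pT2: "\<phi> ?T2 \<in> ?FK" using phiF[OF T2F] .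
    have pT2V: "\<phi> ?T2 \<subseteq> ?XK" using tarV_sub[OF pT2] .
    have c2: "2 \<le> card (\<phi> ?T2)" using K_card2[OF q] pT2 unfolding psd_tar_V_def by simp
    have w: "(?RK ^^ card (?XK - \<phi> ?T2)) ?XK (\<phi> ?T2)"
      using up_walk[OF finK pT2 pT2V] by simp
    have w2: "(?RG ^^ card (?XK - \<phi> ?T2)) ?U ?T2"
      using trK[OF w] psiphi[OF T2F] by simp
    have "card ((?U - ?T2) \<union> (?T2 - ?U)) \<le> card (?XK - \<phi> ?T2)"
      by (rule walk_bound[OF finV UF w2])
    also have "\<dots> = q + 2 - card (\<phi> ?T2)" using pT2V finK cK by (simp add: card_Diff_subset finite_subset)
    finally have "card ((?U - ?T2) \<union> (?T2 - ?U)) \<le> q" using c2 by simp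
    moreover have "card ((?U - ?T2) \<union> (?T2 - ?U)) = card V - card (?U \<inter> T)"
      by (rule card_symd_compl[OF finV UV TV])
    ultimately have "2 \<le> card (?U \<inter> T)" using cV by simp
    moreover have "card (?U \<inter> T) \<le> card T" using finV TV by (intro card_mono) (auto intro: finite_subset)
    ultimately show ?thesis by simp
  qed
  have phiV: "\<phi> V = ?XK"
  proof (rule ccontr)
    assume ne: "\<phi> V \<noteq> ?XK"
    let ?S = "\<phi> V"
    have SF: "?S \<in> ?FK" using phiF[OF VF] .
    have SV: "?S \<subseteq> ?XK" using tarV_sub[OF SF] .
    obtain x where x: "x \<in> ?XK" "x \<notin> ?S" using ne SV by blast
    define y where "y = (if x < 2 then 2 else (0::nat))"
    have Pf: "psd_forcing_set ?XK ?EK {x, y}"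
    proof (cases "x < 2")
      case True
      then show ?thesis using K_ab[OF q True, of 2] q unfolding y_def by simp
    next
      case False
      have "x < q + 2" using x unfolding K2q_V_def by simp
      then have "psd_forcing_set ?XK ?EK {0, x}" using K_ab[OF q _ _, of 0 x] False by simp
      then show ?thesis unfolding y_def using False by (simp add: insert_commute)
    qed
    have PV: "{x, y} \<subseteq> ?XK" using Pf unfolding psd_forcing_set_def by simp
    let ?T = "{x, y} \<union> (?XK - ?S)"
    have TF: "?T \<in> ?FK" using fs_up[OF Pf, of ?T] PV unfolding psd_tar_V_def by blast
    have TV: "?T \<subseteq> ?XK" using tarV_sub[OF TF] .
    let ?TG = "\<psi> ?T"
    have TGF: "?TG \<in> ?FG" using psiF[OF TF] .
    have TGV: "?TG \<subseteq> V" using tarV_sub[OF TGF] .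
    have cTG: "2 \<le> card ?TG" using G2[OF TGF] .
    have w: "(?RG ^^ card (V - ?TG)) V ?TG" using up_walk[OF finV TGF TGV] by simp
    have w2: "(?RK ^^ card (V - ?TG)) ?S ?T" using trG[OF w] phipsi[OF TF] by simp
    have "card ((?S - ?T) \<union> (?T - ?S)) \<le> card (V - ?TG)" by (rule walk_bound[OF finK SF w2])
    also have "\<dots> = card V - card ?TG" using finV TGV by (simp add: card_Diff_subset finite_subset)
    finally have le: "card ((?S - ?T) \<union> (?T - ?S)) \<le> q" using cTG cV by simp
    have "card ((?S - ?T) \<union> (?T - ?S)) = card ?XK - card (?S \<inter> {x, y})"
      by (rule card_symd_compl[OF finK SV PV])
    moreover have "card (?S \<inter> {x, y}) \<le> 1"
    proof -
      have "?S \<inter> {x, y} \<subseteq> {y}" using x by blast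
      then show ?thesis using card_mono[of "{y}"] by fastforce
    qed
    ultimately show False using le cK by simp
  qed
  have psiK: "\<psi> ?XK = V" using psiphi[OF VF] phiV by simp
  have size: "card (\<phi> S) = card S" if S: "S \<in> ?FG" for S
  proof -
    have SV: "S \<subseteq> V" using tarV_sub[OF S] .
    have pS: "\<phi> S \<in> ?FK" using phiF[OF S] .
    have pSV: "\<phi> S \<subseteq> ?XK" using tarV_sub[OF pS] .
    have w: "(?RG ^^ card (V - S)) V S" using up_walk[OF finV S SV] by simp
    have "(?RK ^^ card (V - S)) ?XK (\<phi> S)" using trG[OF w] phiV by simp
    then have "card ((?XK - \<phi> S) \<union> (\<phi> S - ?XK)) \<le> card (V - S)" by (rule walk_bound[OF finK XKF])
    then have i1: "q + 2 - card (\<phi> S) \<le> card V - card S"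
      using card_symd_sub[OF finK pSV] cK finV SV by (simp add: card_Diff_subset finite_subset)
    have w': "(?RK ^^ card (?XK - \<phi> S)) ?XK (\<phi> S)" using up_walk[OF finK pS pSV] by simp
    have "(?RG ^^ card (?XK - \<phi> S)) V S" using trK[OF w'] psiK psiphi[OF S] by simp
    then have "card ((V - S) \<union> (S - V)) \<le> card (?XK - \<phi> S)" by (rule walk_bound[OF finV VF])
    then have i2: "card V - card S \<le> q + 2 - card (\<phi> S)"
      using card_symd_sub[OF finV SV] cK finK pSV by (simp add: card_Diff_subset finite_subset)
    have "card S \<le> card V" using SV finV card_mono by blast
    moreover have "card (\<phi> S) \<le> q + 2" using pSV finK cK card_mono by metis
    ultimately show ?thesis using i1 i2 cV by linarith
  qed
  let ?B = "{2..<q+2}"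
  have BF: "?B \<in> ?FK" using K_B[OF q] unfolding psd_tar_V_def by simp
  define S0 where "S0 = \<psi> ?B"
  have S0F: "S0 \<in> ?FG" unfolding S0_def using psiF[OF BF] .
  have phiS0: "\<phi> S0 = ?B" unfolding S0_def using phipsi[OF BF] .
  have cS0: "card S0 = q" using size[OF S0F] phiS0 by simp
  have S0V: "S0 \<subseteq> V" using tarV_sub[OF S0F] .
  have finS0: "finite S0" using finV S0V finite_subset by blast
  have fS0: "psd_forcing_set V E S0" using S0F unfolding psd_tar_V_def by simp
  have nS1: "\<not> psd_forcing_set V E (S0 - {x})" if x: "x \<in> S0" for x
  proof
    assume f: "psd_forcing_set V E (S0 - {x})"
    let ?T = "S0 - {x}"
    have TF: "?T \<in> ?FG" using f unfolding psd_tar_V_def by simp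
    have "(S0 - ?T) \<union> (?T - S0) = {x}" using x by blast
    then have "?RG S0 ?T" unfolding psd_tar_E_def using S0F TF by simp
    then have "?RK ?B (\<phi> ?T)" using phie S0F TF phiS0 by metis
    then have c1: "card ((?B - \<phi> ?T) \<union> (\<phi> ?T - ?B)) = 1" unfolding psd_tar_E_def by blast
    have cT: "card (\<phi> ?T) = q - 1" using size[OF TF] cS0 x finS0 by simp
    have pT: "\<phi> ?T \<in> ?FK" using phiF[OF TF] .
    have finT: "finite (\<phi> ?T)" using tarV_sub[OF pT] finK finite_subset by blast
    have "\<phi> ?T \<subset> ?B" by (rule adj_smaller) (use c1 cT q finT in auto)
    then have "\<not> psd_forcing_set ?XK ?EK (\<phi> ?T)" using K_nonsub[OF q] by blast
    then show False using pT unfolding psd_tar_V_def by simp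
  qed
  have nS: "\<not> psd_forcing_set V E X" if X: "X \<subset> S0" for X
  proof
    assume f: "psd_forcing_set V E X"
    obtain x where x: "x \<in> S0" "x \<notin> X" using X by blast
    have "psd_forcing_set V E (S0 - {x})" using fs_up[OF f, of "S0 - {x}"] X x S0V by blast
    then show False using nS1[OF x(1)] by contradiction
  qed
  have n1: "\<not> psd_forcing_set V E X" if "card X \<le> 1" for X
    using G2[of X] that unfolding psd_tar_V_def by auto
  have "card (V - S0) = 2" using cV cS0 S0V finV by (simp add: card_Diff_subset finite_subset)
  then obtain a1 a2 where a12: "V - S0 = {a1, a2}" "a1 \<noteq> a2" by (meson card_2_iff)
  have a1S: "a1 \<notin> S0" and a2S: "a2 \<notin> S0" using a12 by blast+
  have Veq: "V = insert a1 (insert a2 S0)" using a12 S0V by blast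
  let ?M = "{{a1},{a2}} \<union> (Pow S0 - {S0})"
  let ?NK = "{{0},{1}} \<union> (Pow ?B - {?B})"
  have cFK: "card ?FK = 2 ^ (q + 2) - (2 ^ q + 1)"
  proof -
    have "card ?NK = 2 ^ card ?B + 1" by (rule card_M) auto
    then have cN: "card ?NK = 2 ^ q + 1" by simp
    have "?NK \<subseteq> Pow ?XK" unfolding K2q_V_def by auto
    then have "card (Pow ?XK - ?NK) = 2 ^ card ?XK - card ?NK" by (rule card_PowM[OF finK])
    then show ?thesis using K_F[OF q] cN cK by simp
  qed
  have cFG: "card ?FG = card ?FK" using phib by (rule bij_betw_same_card)
  have FGsub: "?FG \<subseteq> Pow V - ?M"
  proof
    fix T assume T: "T \<in> ?FG"
    have "T \<subseteq> V" using tarV_sub[OF T] .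
    moreover have "T \<noteq> {a1}" "T \<noteq> {a2}" using G2[OF T] by auto
    moreover have "\<not> T \<subset> S0" using nS T unfolding psd_tar_V_def by blast
    ultimately show "T \<in> Pow V - ?M" by blast
  qed
  have cM: "card ?M = 2 ^ q + 1" using card_M[OF finS0 a12(2) a1S a2S] cS0 by simp
  have "?M \<subseteq> Pow V" using Veq by blast
  then have cPM: "card (Pow V - ?M) = 2 ^ (q + 2) - (2 ^ q + 1)"
    using card_PowM[OF finV] cM cV by simp
  have FGeq: "?FG = Pow V - ?M"
    by (rule card_subset_eq) (use FGsub cPM cFG cFK finV in auto)
  have fA: "psd_forcing_set V E X" if "X \<subseteq> V" "2 \<le> card X" "\<not> X \<subseteq> S0" for X
  proof -
    have "X \<noteq> {a1}" "X \<noteq> {a2}" using that(2) by auto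
    then have "X \<in> Pow V - ?M" using that by blast
    then show ?thesis using FGeq unfolding psd_tar_V_def by blast
  qed
  have "gset V E S0 q a1 a2"
    by (unfold_locales) (use sg ni a1S a2S a12(2) Veq cS0 q fS0 fA nS n1 in blast)+
  then show ?thesis by (rule gset.final)
qed

end
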